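(* Consider the network and Algorithm 1 described in the context, with parameter $\Delta_{est}\ge\Delta$, and assume $\delta\le\frac17$. Let $0<\epsilon<1$, let $v\to u$ be a link, and let $\sigma$ be a sequence of $\frac{8\max(2S,3\Delta_{est})}{\rho}\ln\!\left(\frac{N^2}{\epsilon}\right)$ frame-pairs that is admissible with respect to $v\to u$. Then the probability that $\sigma$ does not cover $v\to u$ is at most $\frac{\epsilon}{N^2}$.
   Context: Network: a finite set of $N$ nodes; each node $u$ has a nonempty available channel set $A_u$; $S=\max_u |A_u|$. Neighborhood on a channel is symmetric; all channels have identical propagation characteristics, so $u,v$ are neighbors on $c$ iff they are neighbors on some channel and $c\in A_u\cap A_v$. $\deg(u,c)$ is the number of neighbors of $u$ on $c$, $\Delta=\max_u\max_{c\in A_u}\deg(u,c)$. For neighbors $v,u$ the link $v\to u$ has span $\mathrm{span}(v\to u)=A_u\cap A_v$ and span-ratio $|\mathrm{span}(v\to u)|/|A_u|$; $\rho$ is the minimum span-ratio over all links. A node operates on one channel at a time, cannot transmit and receive simultaneously; a node listening on $c$ throughout a real-time interval $I$ receives a message transmitted on $c$ during $I$ by a neighbor $v$ provided no other neighbor on $c$ transmits on $c$ during $I$; no collision detection. Clocks: each node $u$ has a clock $C_u$ with $(1-\delta)\Delta t\le C_u(t+\Delta t)-C_u(t)\le(1+\delta)\Delta t$ for all real $t$, $\Delta t\ge0$; arbitrary offsets. Algorithm 1 (input: positive integer $\Delta_{est}$, upper bound on $\Delta$ known to all nodes): each node starts at an arbitrary real time and partitions local time into consecutive frames of local length $L$,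 each split into three slots of local length $L/3$. At the start of each frame, node $u$ picks $c$ uniformly at random from $A_u$, and with probability $p_u=\min(\frac12,\frac{|A_u|}{3\Delta_{est}})$ transmits on $c$ during each of the three slots a message with its identity and $A_u$; otherwise it listens on $c$ during the entire frame, recording each sender $v$ (with set $A$) as a neighbor with common channels $A\cap A_u$. Random choices are independent across frames and nodes. Definitions: for a frame $f$, $\mathrm{node}(f)$ is the node owning it. A pair $(f,g)$ is aligned if some slot of $f$ lies completely within $g$ in real time. $\mathrm{overlap}(g,w)$ is the set of frames of $w$ overlapping $g$ in real time, and $\mathrm{overlapAll}(g)$ is the set of all frames (of all nodes) overlapping $g$. $(f,g)$ with $\mathrm{node}(f)=v$, $\mathrm{node}(g)=u$ covers $v\to u$ on $c$ if $v$ transmits on $c$ during $f$, $u$ listens on $c$ during $g$, and no neighbor $w\ne v$ of $u$ on $c$ transmits on $c$ during any frame in $\mathrm{overlap}(g,w)$; it covers $v\to u$ if it does so on some $c\in\mathrm{span}(v\to u)$. $(f,g)$ precedes $(p,q)$ if $\mathrm{node}(f)=\mathrm{node}(p)$, $\mathrm{node}(g)=\mathrm{node}(q)$, $f$ starts before $p$ and $g$ starts before $q$. A sequence $(f_1,g_1),\dots,(f_M,g_M)$ of frame-pairs is admissible with respect to $v\to u$ if $\mathrm{node}(f_k)=v$ and $\mathrm{node}(g_k)=u$ for all $k$, $(f_k,g_k)$ precedes $(f_{k+1},g_{k+1})$ for $k<M$, each $(f_k,g_k)$ is aligned, and $\mathrm{overlapAll}(g_k)\cap\mathrm{overlapAll}(g_{k+1})=\emptyset$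 for $k<M$. A sequence covers $v\to u$ if some frame-pair in it covers $v\to u$. *)

theory Defs
  imports "HOL-Probability.Probability"
begin

(* Frames are identified by (owner node, index k); frame k of node u occupies local
   times [C u (s u) + k L, C u (s u) + (k+1) L).  Outcomes of the algorithm:
   omega (u,k) = (channel chosen, transmits?) for frame k of node u. *)

type_synonym 'n frame = "'n \<times> nat"

definition nbc :: "('n \<Rightarrow> 'c set) \<Rightarrow> ('n \<Rightarrow> 'n \<Rightarrow> bool) \<Rightarrow> 'n \<Rightarrow> 'n \<Rightarrow> 'c \<Rightarrow> bool" where
  "nbc A nb u w c \<longleftrightarrow> nb u w \<and> c \<in> A u \<inter> A w"

definition neighbors :: "('n \<Rightarrow> 'c set) \<Rightarrow> ('n \<Rightarrow> 'n \<Rightarrow> bool) \<Rightarrow> 'n \<Rightarrow> 'n \<Rightarrow> bool" where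
  "neighbors A nb u w \<longleftrightarrow> (\<exists>c. nbc A nb u w c)"

definition deg :: "('n \<Rightarrow> 'c set) \<Rightarrow> ('n \<Rightarrow> 'n \<Rightarrow> bool) \<Rightarrow> 'n \<Rightarrow> 'c \<Rightarrow> nat" where
  "deg A nb u c = card {w. nbc A nb u w c}"

definition Delta :: "('n::finite \<Rightarrow> 'c set) \<Rightarrow> ('n \<Rightarrow> 'n \<Rightarrow> bool) \<Rightarrow> nat" where
  "Delta A nb = Max {deg A nb u c | u c. c \<in> A u}"

definition Smax :: "('n::finite \<Rightarrow> 'c set) \<Rightarrow> nat" where
  "Smax A = Max (range (\<lambda>u. card (A u)))"

definition span :: "('n \<Rightarrow> 'c set) \<Rightarrow> 'n \<Rightarrow> 'n \<Rightarrow> 'c set" where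
  "span A v u = A u \<inter> A v"

definition span_ratio :: "('n \<Rightarrow> 'c set) \<Rightarrow> 'n \<Rightarrow> 'n \<Rightarrow> real" where
  "span_ratio A v u = real (card (span A v u)) / real (card (A u))"

definition rho :: "('n \<Rightarrow> 'c set) \<Rightarrow> ('n \<Rightarrow> 'n \<Rightarrow> bool) \<Rightarrow> real" where
  "rho A nb = Min {span_ratio A v u | v u. neighbors A nb v u}"

definition frame_time :: "('n \<Rightarrow> real \<Rightarrow> real) \<Rightarrow> ('n \<Rightarrow> real) \<Rightarrow> real \<Rightarrow> 'n frame \<Rightarrow> real set" where
  "frame_time C s L f = {t. C (fst f) (s (fst f)) + real (snd f) * L \<le> C (fst f) t \<and>
                            C (fst f) t < C (fst f) (s (fst f)) + (real (snd f) + 1) * L}"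

definition slot_time :: "('n \<Rightarrow> real \<Rightarrow> real) \<Rightarrow> ('n \<Rightarrow> real) \<Rightarrow> real \<Rightarrow> 'n frame \<Rightarrow> nat \<Rightarrow> real set" where
  "slot_time C s L f j = {t. C (fst f) (s (fst f)) + real (snd f) * L + real j * (L / 3) \<le> C (fst f) t \<and>
                             C (fst f) t < C (fst f) (s (fst f)) + real (snd f) * L + (real j + 1) * (L / 3)}"

definition aligned :: "('n \<Rightarrow> real \<Rightarrow> real) \<Rightarrow> ('n \<Rightarrow> real) \<Rightarrow> real \<Rightarrow> 'n frame \<Rightarrow> 'n frame \<Rightarrow> bool" where
  "aligned C s L f g \<longleftrightarrow> (\<exists>j<3. slot_time C s L f j \<subseteq> frame_time C s L g)"

definition overlap :: "('n \<Rightarrow> real \<Rightarrow> real) \<Rightarrow> ('n \<Rightarrow> real) \<Rightarrow> real \<Rightarrow> 'n frame \<Rightarrow> 'n \<Rightarrow> 'n frame set" where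
  "overlap C s L g w = {h. fst h = w \<and> frame_time C s L h \<inter> frame_time C s L g \<noteq> {}}"

definition overlapAll :: "('n \<Rightarrow> real \<Rightarrow> real) \<Rightarrow> ('n \<Rightarrow> real) \<Rightarrow> real \<Rightarrow> 'n frame \<Rightarrow> 'n frame set" where
  "overlapAll C s L g = {h. frame_time C s L h \<inter> frame_time C s L g \<noteq> {}}"

(* (f,g) precedes (p,q): same nodes, f starts before p, g starts before q
   (for frames of the same node, starting earlier = smaller index) *)
definition precedes :: "'n frame \<times> 'n frame \<Rightarrow> 'n frame \<times> 'n frame \<Rightarrow> bool" where
  "precedes fg pq \<longleftrightarrow> fst (fst fg) = fst (fst pq) \<and> fst (snd fg) = fst (snd pq) \<and>
                       snd (fst fg) < snd (fst pq) \<and> snd (snd fg) < snd (snd pq)"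

definition admissible :: "('n \<Rightarrow> real \<Rightarrow> real) \<Rightarrow> ('n \<Rightarrow> real) \<Rightarrow> real \<Rightarrow> 'n \<Rightarrow> 'n \<Rightarrow>
    (nat \<Rightarrow> 'n frame \<times> 'n frame) \<Rightarrow> nat \<Rightarrow> bool" where
  "admissible C s L v u \<sigma> M \<longleftrightarrow>
     (\<forall>k<M. fst (fst (\<sigma> k)) = v \<and> fst (snd (\<sigma> k)) = u \<and> aligned C s L (fst (\<sigma> k)) (snd (\<sigma> k))) \<and>
     (\<forall>k. k + 1 < M \<longrightarrow> precedes (\<sigma> k) (\<sigma> (k + 1)) \<and>
         overlapAll C s L (snd (\<sigma> k)) \<inter> overlapAll C s L (snd (\<sigma> (k + 1))) = {})"

definition transmits :: "('n frame \<Rightarrow> 'c \<times> bool) \<Rightarrow> 'n frame \<Rightarrow> 'c \<Rightarrow> bool" where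
  "transmits \<omega> f c \<longleftrightarrow> \<omega> f = (c, True)"

definition listens :: "('n frame \<Rightarrow> 'c \<times> bool) \<Rightarrow> 'n frame \<Rightarrow> 'c \<Rightarrow> bool" where
  "listens \<omega> f c \<longleftrightarrow> \<omega> f = (c, False)"

definition covers_on :: "('n \<Rightarrow> 'c set) \<Rightarrow> ('n \<Rightarrow> 'n \<Rightarrow> bool) \<Rightarrow> ('n \<Rightarrow> real \<Rightarrow> real) \<Rightarrow> ('n \<Rightarrow> real) \<Rightarrow> real \<Rightarrow>
    ('n frame \<Rightarrow> 'c \<times> bool) \<Rightarrow> 'n frame \<Rightarrow> 'n frame \<Rightarrow> 'c \<Rightarrow> bool" where
  "covers_on A nb C s L \<omega> f g c \<longleftrightarrow>
     transmits \<omega> f c \<and> listens \<omega> g c \<and>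
     (\<forall>w. w \<noteq> fst f \<and> nbc A nb (fst g) w c \<longrightarrow> (\<forall>h\<in>overlap C s L g w. \<not> transmits \<omega> h c))"

definition covers :: "('n \<Rightarrow> 'c set) \<Rightarrow> ('n \<Rightarrow> 'n \<Rightarrow> bool) \<Rightarrow> ('n \<Rightarrow> real \<Rightarrow> real) \<Rightarrow> ('n \<Rightarrow> real) \<Rightarrow> real \<Rightarrow>
    ('n frame \<Rightarrow> 'c \<times> bool) \<Rightarrow> 'n frame \<Rightarrow> 'n frame \<Rightarrow> bool" where
  "covers A nb C s L \<omega> f g \<longleftrightarrow> (\<exists>c\<in>span A (fst f) (fst g). covers_on A nb C s L \<omega> f g c)"

definition seq_covers :: "('n \<Rightarrow> 'c set) \<Rightarrow> ('n \<Rightarrow> 'n \<Rightarrow> bool) \<Rightarrow> ('n \<Rightarrow> real \<Rightarrow> real) \<Rightarrow> ('n \<Rightarrow> real) \<Rightarrow> real \<Rightarrow>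
    ('n frame \<Rightarrow> 'c \<times> bool) \<Rightarrow> (nat \<Rightarrow> 'n frame \<times> 'n frame) \<Rightarrow> nat \<Rightarrow> bool" where
  "seq_covers A nb C s L \<omega> \<sigma> M \<longleftrightarrow> (\<exists>k<M. covers A nb C s L \<omega> (fst (\<sigma> k)) (snd (\<sigma> k)))"

definition p_tx :: "('n \<Rightarrow> 'c set) \<Rightarrow> nat \<Rightarrow> 'n \<Rightarrow> real" where
  "p_tx A Dest u = min (1/2) (real (card (A u)) / (3 * real Dest))"

definition frame_pmf :: "('n \<Rightarrow> 'c set) \<Rightarrow> nat \<Rightarrow> 'n \<Rightarrow> ('c \<times> bool) pmf" where
  "frame_pmf A Dest u = pair_pmf (pmf_of_set (A u)) (bernoulli_pmf (p_tx A Dest u))"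

definition alg_space :: "('n \<Rightarrow> 'c set) \<Rightarrow> nat \<Rightarrow> ('n frame \<Rightarrow> 'c \<times> bool) measure" where
  "alg_space A Dest = PiM UNIV (\<lambda>f. measure_pmf (frame_pmf A Dest (fst f)))"

end

theory Submission
  imports Defs
begin


locale clk =
  fixes C :: "'n \<Rightarrow> real \<Rightarrow> real" and \<delta> :: real and L :: real
  assumes clocks: "\<forall>w t dt. dt \<ge> 0 \<longrightarrow>
        (1 - \<delta>) * dt \<le> C w (t + dt) - C w t \<and> C w (t + dt) - C w t \<le> (1 + \<delta>) * dt"
    and delta_le: "\<delta> \<le> 1/7"
    and L_pos: "L > 0"
begin

lemma cl: "dt \<ge> 0 \<Longrightarrow> (1 - \<delta>) * dt \<le> C w (t + dt) - C w t \<and> C w (t + dt) - C w t \<le> (1 + \<delta>) * dt"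
  using clocks by blast

lemma cl2: "t \<le> t' \<Longrightarrow> (1 - \<delta>) * (t' - t) \<le> C w t' - C w t \<and> C w t' - C w t \<le> (1 + \<delta>) * (t' - t)"
  using cl[of "t' - t" w t] by simp

lemma delta_nn: "\<delta> \<ge> 0"
  using cl2[of 0 1 undefined] by simp

lemma mono_lt: "t < t' \<Longrightarrow> C w t < C w t'"
proof -
  assume "t < t'"
  with cl2[of t t' w] have "(1 - \<delta>) * (t' - t) \<le> C w t' - C w t" by simp
  moreover have "(1 - \<delta>) * (t' - t) > 0" using \<open>t < t'\<close> delta_le by (intro mult_pos_pos) auto
  ultimately show ?thesis by simp
qed

lemma mono_le: "t \<le> t' \<Longrightarrow> C w t \<le> C w t'"
  using mono_lt[of t t' w] by (cases "t = t'") auto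

lemma mono_rev: "C w t < C w t' \<Longrightarrow> t < t'"
  using mono_le[of t' t w] by force

lemma lip: "\<bar>C w x - C w t\<bar> \<le> (1 + \<delta>) * \<bar>x - t\<bar>"
proof (cases "t \<le> x")
  case True
  have "(1 - \<delta>) * (x - t) \<ge> 0" using True delta_le by (intro mult_nonneg_nonneg) auto
  then show ?thesis using cl2[of t x w] True by (auto simp: abs_if)
next
  case False
  have "(1 - \<delta>) * (t - x) \<ge> 0" using False delta_le by (intro mult_nonneg_nonneg) auto
  then show ?thesis using cl2[of x t w] False by (auto simp: abs_if)
qed

lemma cont: "isCont (C w) t"
  unfolding isCont_def LIM_eq
proof (intro allI impI)
  fix r :: real assume r: "r > 0"
  show "\<exists>s>0. \<forall>x. x \<noteq> t \<and> norm (x - t) < s \<longrightarrow> norm (C w x - C w t) < r"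
  proof (intro exI[of _ "r/2"] conjI allI impI)
    fix x assume x: "x \<noteq> t \<and> norm (x - t) < r / 2"
    have "\<bar>C w x - C w t\<bar> \<le> (1 + \<delta>) * \<bar>x - t\<bar>" by (rule lip)
    also have "\<dots> \<le> (8/7) * \<bar>x - t\<bar>" using delta_le by (intro mult_right_mono) auto
    also have "\<dots> < r" using x r by auto
    finally show "norm (C w x - C w t) < r" by simp
  qed (use r in auto)
qed

lemma ft: "t \<in> frame_time C s L h \<longleftrightarrow> C (fst h) (s (fst h)) + real (snd h) * L \<le> C (fst h) t \<and>
              C (fst h) t < C (fst h) (s (fst h)) + (real (snd h) + 1) * L"
  by (simp add: frame_time_def)

lemma ov_close:
  assumes t1: "t1 \<in> frame_time C s L (w, k1)" "t1 \<in> frame_time C s L g"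
    and t2: "t2 \<in> frame_time C s L (w, k2)" "t2 \<in> frame_time C s L g"
  shows "k2 \<le> k1 + 2"
proof (rule ccontr)
  assume "\<not> k2 \<le> k1 + 2"
  then have k: "real k2 \<ge> real k1 + 3" by simp
  define a where "a = C w (s w)"
  define b where "b = C (fst g) (s (fst g))"
  have w1: "C w t1 < a + (real k1 + 1) * L" using t1 by (simp add: ft a_def)
  have w2: "a + real k2 * L \<le> C w t2" using t2 by (simp add: ft a_def)
  have "real k2 * L \<ge> (real k1 + 3) * L" using k L_pos by (intro mult_right_mono) auto
  then have wd: "C w t2 - C w t1 > 2 * L" using w1 w2 by (simp add: algebra_simps)
  then have "C w t1 < C w t2" using L_pos by linarith
  then have "t1 < t2" by (rule mono_rev)
  define dt where "dt = t2 - t1"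
  have dt: "dt > 0" using \<open>t1 < t2\<close> by (simp add: dt_def)
  have u1: "b + real (snd g) * L \<le> C (fst g) t1" "C (fst g) t1 < b + (real (snd g) + 1) * L"
    using t1 by (simp_all add: ft b_def)
  have u2: "b + real (snd g) * L \<le> C (fst g) t2" "C (fst g) t2 < b + (real (snd g) + 1) * L"
    using t2 by (simp_all add: ft b_def)
  have ud: "C (fst g) t2 - C (fst g) t1 < L" using u1 u2 by (simp add: algebra_simps)
  have c1: "C w t2 - C w t1 \<le> (1 + \<delta>) * dt" using cl2[of t1 t2 w] \<open>t1 < t2\<close> by (simp add: dt_def)
  have c2: "(1 - \<delta>) * dt \<le> C (fst g) t2 - C (fst g) t1" using cl2[of t1 t2 "fst g"] \<open>t1 < t2\<close> by (simp add: dt_def)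
  have dd: "\<delta> * dt \<le> dt / 7" using delta_le dt by (simp add: mult_right_mono)
  have e1: "(1 + \<delta>) * dt = dt + \<delta> * dt" "(1 - \<delta>) * dt = dt - \<delta> * dt" by (simp_all add: algebra_simps)
  show False using wd ud c1 c2 dd dt L_pos unfolding e1 by linarith
qed

lemma overlap_fin_card:
  shows "finite (overlap C s L g w) \<and> card (overlap C s L g w) \<le> 3"
proof -
  define K where "K = {k. frame_time C s L (w, k) \<inter> frame_time C s L g \<noteq> {}}"
  have eq: "overlap C s L g w = Pair w ` K"
    by (auto simp: overlap_def K_def image_def)
  show ?thesis
  proof (cases "K = {}")
    case True then show ?thesis by (simp add: eq)
  next
    case False
    then obtain k0 where k0: "k0 \<in> K" by auto
    have close: "k2 \<le> k1 + 2" if "k1 \<in> K" "k2 \<in> K" for k1 k2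
    proof -
      from that obtain t1 t2 where "t1 \<in> frame_time C s L (w, k1)" "t1 \<in> frame_time C s L g"
        "t2 \<in> frame_time C s L (w, k2)" "t2 \<in> frame_time C s L g" by (auto simp: K_def)
      then show ?thesis by (rule ov_close)
    qed
    have "K \<subseteq> {..k0 + 2}" using close[OF k0] by auto
    then have fin: "finite K" by (rule finite_subset) simp
    define m where "m = Min K"
    have "m \<in> K" using fin False by (simp add: m_def)
    have "K \<subseteq> {m..m+2}" using close[OF \<open>m \<in> K\<close>] fin by (auto simp: m_def)
    then have "card K \<le> card {m..m+2}" by (intro card_mono) auto
    then have "card K \<le> 3" by simp
    moreover have "card (Pair w ` K) \<le> card K" by (rule card_image_le[OF fin])
    ultimately show ?thesis using fin by (simp add: eq)
  qed
qed

lemma overlapAll_mid: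
  assumes u: "fst g1 = fst g2" "fst g3 = fst g2"
    and j: "snd g1 < snd g2" "snd g2 < snd g3"
    and h1: "h \<in> overlapAll C s L g1" and h3: "h \<in> overlapAll C s L g3"
  shows "h \<in> overlapAll C s L g2"
proof -
  obtain t1 where t1: "t1 \<in> frame_time C s L h" "t1 \<in> frame_time C s L g1"
    using h1 by (auto simp: overlapAll_def)
  obtain t3 where t3: "t3 \<in> frame_time C s L h" "t3 \<in> frame_time C s L g3"
    using h3 by (auto simp: overlapAll_def)
  define uu where "uu = fst g2"
  define b where "b = C uu (s uu)"
  define y where "y = b + real (snd g2) * L"
  have "real (snd g1) + 1 \<le> real (snd g2)" using j by simp
  then have "(real (snd g1) + 1) * L \<le> real (snd g2) * L" using L_pos by (intro mult_right_mono) auto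
  moreover have "C uu t1 < b + (real (snd g1) + 1) * L" using t1 u by (simp add: ft b_def uu_def)
  ultimately have y1: "C uu t1 \<le> y" by (simp add: y_def)
  have "real (snd g2) + 1 \<le> real (snd g3)" using j by simp
  then have "(real (snd g2) + 1) * L \<le> real (snd g3) * L" using L_pos by (intro mult_right_mono) auto
  moreover have "b + real (snd g3) * L \<le> C uu t3" using t3 u by (simp add: ft b_def uu_def)
  ultimately have y3: "y + L \<le> C uu t3" by (simp add: y_def algebra_simps)
  have "C uu t1 < C uu t3" using y1 y3 L_pos by simp
  then have "t1 < t3" by (rule mono_rev)
  obtain t where t: "t1 \<le> t" "t \<le> t3" "C uu t = y"
  proof -
    have "C uu t1 \<le> y" "y \<le> C uu t3" "t1 \<le> t3" using y1 y3 \<open>t1 < t3\<close> L_pos by auto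
    from IVT[of "C uu" t1 y t3, OF this] cont[where w=uu] show ?thesis using that by blast
  qed
  have "t \<in> frame_time C s L g2" using t L_pos by (simp add: ft y_def b_def uu_def)
  moreover have "t \<in> frame_time C s L h"
    using t1(1) t3(1) mono_le[OF t(1), of "fst h"] mono_le[OF t(2), of "fst h"] by (auto simp: ft)
  ultimately show ?thesis by (auto simp: overlapAll_def)
qed

end


lemma pow_quarter:
  fixes D :: nat assumes "D \<ge> 1"
  shows "(1 - 1 / (3 * real D)) ^ (3 * D - 3) \<ge> 1/4"
proof -
  define m where "m = 3 * D - 1"
  have m2: "m \<ge> 2" using assms by (simp add: m_def)
  have x: "1 - 1 / (3 * real D) = 1 / (1 + 1 / real m)"
    using assms m2 by (simp add: m_def of_nat_diff field_simps)
  have "(1 + 1 / real m) ^ m \<le> exp 1"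
    using exp_ge_one_plus_x_over_n_power_n[of m 1] m2 by simp
  also have "\<dots> \<le> 4" using exp_le by simp
  finally have b: "(1 + 1 / real m) ^ m \<le> 4" .
  have pos: "(1 + 1 / real m) ^ m > 0" by (intro zero_less_power) (simp add: add_pos_nonneg)
  have "1/4 \<le> 1 / (1 + 1 / real m) ^ m" using b pos by (simp add: field_simps)
  also have "\<dots> = (1 - 1 / (3 * real D)) ^ m" by (simp add: x power_one_over)
  also have "\<dots> \<le> (1 - 1 / (3 * real D)) ^ (3 * D - 3)"
    using assms by (intro power_decreasing) (auto simp: m_def field_simps)
  finally show ?thesis .
qed

lemma (in product_prob_space) measure_PiM_Collect:
  assumes X: "J \<subseteq> I" "finite J" "\<And>i. i \<in> J \<Longrightarrow> X i \<in> sets (M i)"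
  shows "measure (Pi\<^sub>M I M) {x\<in>space (Pi\<^sub>M I M). \<forall>i\<in>J. x i \<in> X i} = (\<Prod> i\<in>J. measure (M i) (X i))"
  using emeasure_PiM_Collect[OF assms]
  unfolding emeasure_eq_measure M.emeasure_eq_measure
  by (simp add: prod_ennreal measure_nonneg prod_nonneg)

lemma pmf_frame: 
  assumes "finite (A w)" "A w \<noteq> {}" "Dest > 0"
  shows "pmf (frame_pmf A Dest w) (c, b) =
     indicator (A w) c / real (card (A w)) * (if b then p_tx A Dest w else 1 - p_tx A Dest w)"
proof -
  have "0 \<le> p_tx A Dest w" "p_tx A Dest w \<le> 1" by (auto simp: p_tx_def)
  then show ?thesis using assms by (cases b) (simp_all add: frame_pmf_def pmf_pair)
qed



theorem mainTheorem3:
  fixes A :: "'n::finite \<Rightarrow> 'c set"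
    and nb :: "'n \<Rightarrow> 'n \<Rightarrow> bool"
    and C :: "'n \<Rightarrow> real \<Rightarrow> real"
    and \<delta> :: real
    and s :: "'n \<Rightarrow> real"
    and L :: real
    and Dest :: nat
    and \<epsilon> :: real
    and v u :: 'n
    and \<sigma> :: "nat \<Rightarrow> 'n frame \<times> 'n frame"
    and M :: nat
  assumes chans: "\<forall>w. finite (A w) \<and> A w \<noteq> {}"
    and nb_sym: "\<forall>w x. nb w x \<longleftrightarrow> nb x w"
    and nb_irrefl: "\<forall>w. \<not> nb w w"
    and clocks: "\<forall>w t dt. dt \<ge> 0 \<longrightarrow>
        (1 - \<delta>) * dt \<le> C w (t + dt) - C w t \<and> C w (t + dt) - C w t \<le> (1 + \<delta>) * dt"
    and delta_le: "\<delta> \<le> 1/7"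
    and L_pos: "L > 0"
    and Dest_pos: "Dest > 0"
    and Dest_ge: "Dest \<ge> Delta A nb"
    and eps: "0 < \<epsilon>" "\<epsilon> < 1"
    and link: "neighbors A nb v u"
    and M_def: "M = nat \<lceil>8 * real (max (2 * Smax A) (3 * Dest)) / rho A nb
                          * ln (real CARD('n) ^ 2 / \<epsilon>)\<rceil>"
    and adm: "admissible C s L v u \<sigma> M"
  shows "{\<omega> \<in> space (alg_space A Dest). \<not> seq_covers A nb C s L \<omega> \<sigma> M} \<in> sets (alg_space A Dest) \<and>
         measure (alg_space A Dest) {\<omega> \<in> space (alg_space A Dest). \<not> seq_covers A nb C s L \<omega> \<sigma> M}
           \<le> \<epsilon> / real CARD('n) ^ 2"
proof -
  interpret K: clk C \<delta> L by (rule clk.intro[OF clocks delta_le L_pos])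
  define Mf where "Mf = (\<lambda>f::'n frame. measure_pmf (frame_pmf A Dest (fst f)))"
  define P where "P = alg_space A Dest"
  have P_eq: "P = PiM UNIV Mf" by (simp add: P_def alg_space_def Mf_def)
  have psMf: "prob_space (Mf i)" for i unfolding Mf_def by (rule measure_pmf.prob_space_axioms)
  have pps: "product_prob_space Mf" by (rule product_prob_spaceI) (rule psMf)
  interpret PP: product_prob_space Mf UNIV by (rule pps)
  interpret PS: prob_space P unfolding P_eq by (rule prob_space_PiM) (rule psMf)
  have setsMf[simp]: "sets (Mf i) = UNIV" for i by (simp add: Mf_def)
  define f where "f k = fst (\<sigma> k)" for k
  define g where "g k = snd (\<sigma> k)" for k
  define sp where "sp = span A v u"
  define H where "H k c = {h. \<exists>w. w \<noteq> v \<and> nbc A nb u w c \<and> h \<in> overlap C s L (g k) w}" for k c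
  define cov where "cov k x \<longleftrightarrow> (\<exists>c\<in>sp. x (f k) = (c,True) \<and> x (g k) = (c,False) \<and> (\<forall>h\<in>H k c. x h \<noteq> (c,True)))" for k and x :: "'n frame \<Rightarrow> 'c \<times> bool"
  define J where "J k = insert (f k) (insert (g k) (\<Union>c\<in>sp. H k c))" for k
  define m where "m = real (max (2 * Smax A) (3 * Dest))"
  define r where "r = rho A nb"
  define q where "q = r / (8 * m)"

  have adm1: "\<forall>k<M. fst (fst (\<sigma> k)) = v \<and> fst (snd (\<sigma> k)) = u \<and> aligned C s L (fst (\<sigma> k)) (snd (\<sigma> k))"
    using adm unfolding admissible_def by (rule conjunct1)
  have adm2: "\<forall>k. k + 1 < M \<longrightarrow> precedes (\<sigma> k) (\<sigma> (k + 1)) \<and>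
         overlapAll C s L (snd (\<sigma> k)) \<inter> overlapAll C s L (snd (\<sigma> (k + 1))) = {}"
    using adm unfolding admissible_def by (rule conjunct2)
  have fk: "fst (f k) = v" "fst (g k) = u" if "k < M" for k
    using adm1 that unfolding f_def g_def by blast+
  have vu: "nb v u" using link by (auto simp: neighbors_def nbc_def)
  have uv: "nb u v" using vu nb_sym[rule_format, of u v] by simp
  have v_ne_u: "v \<noteq> u" using vu nb_irrefl by metis
  have finA: "finite (A w)" "A w \<noteq> {}" for w using chans by auto
  have fin_sp: "finite sp" by (simp add: sp_def span_def finA)
  have Hfst: "fst h \<noteq> v \<and> fst h \<noteq> u" if "h \<in> H k c" for h k c
    using that nb_irrefl by (auto simp: H_def overlap_def nbc_def)
  have H_eq: "H k c = (\<Union>w\<in>{w. w \<noteq> v \<and> nbc A nb u w c}. overlap C s L (g k) w)" for k c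
    by (auto simp: H_def)
  have fin_H: "finite (H k c)" for k c
    unfolding H_eq by (intro finite_UN_I) (simp_all add: K.overlap_fin_card)
  have fin_J: "finite (J k)" for k using fin_sp fin_H by (simp add: J_def)

  have cov_eq: "covers A nb C s L \<omega> (f k) (g k) \<longleftrightarrow> cov k \<omega>" if "k < M" for k \<omega>
  proof -
    have e: "(\<forall>w. w \<noteq> v \<and> nbc A nb u w c \<longrightarrow> (\<forall>h\<in>overlap C s L (g k) w. \<omega> h \<noteq> (c,True)))
         \<longleftrightarrow> (\<forall>h\<in>H k c. \<omega> h \<noteq> (c,True))" for c
      by (auto simp: H_def)
    show ?thesis unfolding covers_def covers_on_def transmits_def listens_def fk[OF that] cov_def sp_def
      using e by blast
  qed
  have seq_eq: "seq_covers A nb C s L \<omega> \<sigma> M \<longleftrightarrow> (\<exists>k<M. cov k \<omega>)" for \<omega>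
    unfolding seq_covers_def using cov_eq unfolding f_def g_def by blast
  have cov_restrict: "cov k (restrict x (J k)) \<longleftrightarrow> cov k x" for k x
  proof -
    have e1: "restrict x (J k) (f k) = x (f k)" "restrict x (J k) (g k) = x (g k)" by (simp_all add: J_def)
    have e2: "restrict x (J k) h = x h" if "c \<in> sp" "h \<in> H k c" for c h
      using that by (auto simp: J_def)
    have "(\<forall>h\<in>H k c. restrict x (J k) h \<noteq> (c,True)) \<longleftrightarrow> (\<forall>h\<in>H k c. x h \<noteq> (c,True))" if "c \<in> sp" for c
      using e2[OF that] by simp
    then show ?thesis unfolding cov_def e1 by blast
  qed

  have pred_cov: "Measurable.pred (PiM I Mf) (cov k)" if "J k \<subseteq> I" for I k
  proof -
    have atom: "Measurable.pred (PiM I Mf) (\<lambda>x. x h = a)" if "h \<in> I" for h a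
    proof -
      have "{x \<in> space (PiM I Mf). x h \<in> {a}} \<in> sets (PiM I Mf)"
        using that by (intro sets_Collect_single) auto
      then show ?thesis unfolding pred_def by simp
    qed
    have inI: "f k \<in> I" "g k \<in> I" "\<And>c h. c \<in> sp \<Longrightarrow> h \<in> H k c \<Longrightarrow> h \<in> I" using that by (auto simp: J_def)
    show ?thesis unfolding cov_def
      apply (rule pred_intros_finite(4)[OF fin_sp])
      apply (rule pred_intros_logic(3))
       apply (rule atom, rule inI(1))
      apply (rule pred_intros_logic(3))
       apply (rule atom, rule inI(2))
      apply (rule pred_intros_finite(3)[OF fin_H])
      apply (rule pred_intros_logic(2))
      apply (rule atom)
      apply (erule (1) inI(3))
      done
  qed
  have atomU: "Measurable.pred (PiM UNIV Mf) (\<lambda>x. x h \<in> S)" for h S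
  proof -
    have "{x \<in> space (PiM UNIV Mf). x h \<in> S} \<in> sets (PiM UNIV Mf)"
      by (intro sets_Collect_single) auto
    then show ?thesis unfolding pred_def by simp
  qed

  have Delta_fin: "finite {deg A nb w c |w c. c \<in> A w}"
  proof -
    have "{deg A nb w c |w c. c \<in> A w} \<subseteq> (\<lambda>(w,c). deg A nb w c) ` (SIGMA w:UNIV. A w)" by auto
    moreover have "finite (SIGMA w:UNIV. A w)" using finA by (intro finite_SigmaI) auto
    ultimately show ?thesis using finite_subset by blast
  qed
  have deg_le: "deg A nb u c \<le> Dest" if "c \<in> A u" for c
  proof -
    have "deg A nb u c \<le> Delta A nb" unfolding Delta_def using Delta_fin that by (intro Max_ge) auto
    then show ?thesis using Dest_ge by simp
  qed
  have cardH: "card (H k c) \<le> 3 * (Dest - 1)" if "c \<in> sp" for k c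
  proof -
    define W where "W = {w. w \<noteq> v \<and> nbc A nb u w c}"
    have cu: "c \<in> A u" "c \<in> A v" using that by (auto simp: sp_def span_def)
    have "W = {w. nbc A nb u w c} - {v}" by (auto simp: W_def)
    moreover have "v \<in> {w. nbc A nb u w c}" using uv cu by (simp add: nbc_def)
    ultimately have "card W = deg A nb u c - 1" by (simp add: deg_def card_Diff_singleton)
    then have cW: "card W \<le> Dest - 1" using deg_le[OF cu(1)] by simp
    have "card (H k c) \<le> (\<Sum>w\<in>W. card (overlap C s L (g k) w))"
      unfolding H_eq W_def[symmetric] by (rule card_UN_le) simp
    also have "\<dots> \<le> (\<Sum>w\<in>W. 3)" by (intro sum_mono) (simp add: K.overlap_fin_card)
    also have "\<dots> = 3 * card W" by simp
    finally show ?thesis using cW by simp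
  qed

  have prec: "precedes (\<sigma> k) (\<sigma> (k+1))" "overlapAll C s L (g k) \<inter> overlapAll C s L (g (k+1)) = {}"
    if "k + 1 < M" for k
    using adm2 that unfolding g_def by blast+
  have mono_idx: "snd (f k) < snd (f l) \<and> snd (g k) < snd (g l)" if "k < l" "l < M" for k l
    using that
  proof (induction l)
    case 0 then show ?case by simp
  next
    case (Suc l)
    have "precedes (\<sigma> l) (\<sigma> (Suc l))" using prec(1)[of l] Suc.prems by simp
    then have st: "snd (f l) < snd (f (Suc l)) \<and> snd (g l) < snd (g (Suc l))"
      by (simp add: precedes_def f_def g_def)
    show ?case
    proof (cases "k = l")
      case True then show ?thesis using st by simp
    next
      case False
      then have "k < l" "l < M" using Suc.prems by auto
      from Suc.IH[OF this] st show ?thesis by auto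
    qed
  qed
  have H_ovA: "h \<in> overlapAll C s L (g k)" if "h \<in> H k c" for h k c
    using that by (auto simp: H_def overlap_def overlapAll_def)
  have ovA_disj: "overlapAll C s L (g k) \<inter> overlapAll C s L (g l) = {}" if "k < l" "l < M" for k l
  proof (cases "l = k + 1")
    case True then show ?thesis using prec(2)[of k] that by simp
  next
    case False
    then have kl: "k + 1 < l" using that by simp
    show ?thesis
    proof (rule ccontr)
      assume "overlapAll C s L (g k) \<inter> overlapAll C s L (g l) \<noteq> {}"
      then obtain h where h: "h \<in> overlapAll C s L (g k)" "h \<in> overlapAll C s L (g l)" by blast
      have "fst (g k) = fst (g (k+1))" "fst (g l) = fst (g (k+1))" using fk that kl by simp_all
      moreover have "snd (g k) < snd (g (k+1))" "snd (g (k+1)) < snd (g l)"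
        using mono_idx[of k "k+1"] mono_idx[of "k+1" l] that kl by simp_all
      ultimately have "h \<in> overlapAll C s L (g (k+1))" using h by (rule_tac K.overlapAll_mid[of "g k" _ "g l"]) auto
      moreover have "k + 1 < M" using kl that by simp
      ultimately show False using prec(2)[of k] h by blast
    qed
  qed
  have J_disj: "J k \<inter> J l = {}" if kl: "k < l" "l < M" for k l
  proof -
    have lt: "k < M" using that by simp
    have i1: "snd (f k) \<noteq> snd (f l)" "snd (g k) \<noteq> snd (g l)" using mono_idx[OF that] by auto
    have "x \<notin> J l" if x: "x \<in> J k" for x
    proof -
      consider "x = f k" | "x = g k" | c where "c \<in> sp" "x \<in> H k c" using x unfolding J_def by blast
      then show ?thesis
      proof cases
        case 1
        have "x \<noteq> f l" using i1 1 by auto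
        moreover have "x \<noteq> g l" using 1 fk[OF lt] fk[OF \<open>l < M\<close>] v_ne_u by auto
        moreover have "x \<notin> H l c'" for c' using Hfst[of x l c'] 1 fk[OF lt] by auto
        ultimately show ?thesis unfolding J_def by blast
      next
        case 2
        have "x \<noteq> g l" using i1 2 by auto
        moreover have "x \<noteq> f l" using 2 fk[OF lt] fk[OF \<open>l < M\<close>] v_ne_u by auto
        moreover have "x \<notin> H l c'" for c' using Hfst[of x l c'] 2 fk[OF lt] by auto
        ultimately show ?thesis unfolding J_def by blast
      next
        case 3
        have "x \<noteq> f l" "x \<noteq> g l" using Hfst[OF 3(2)] fk[OF \<open>l < M\<close>] by auto
        moreover have "x \<notin> H l c'" for c'
          using H_ovA[OF 3(2)] H_ovA[of x l c'] ovA_disj[OF kl] by blast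
        ultimately show ?thesis unfolding J_def by blast
      qed
    qed
    then show ?thesis by blast
  qed
  have disjJ: "disjoint_family_on J {..<M}"
    unfolding disjoint_family_on_def
  proof (intro ballI impI)
    fix k l assume "k \<in> {..<M}" "l \<in> {..<M}" "k \<noteq> l"
    then show "J k \<inter> J l = {}" using J_disj[of k l] J_disj[of l k] by (cases "k < l") auto
  qed

  have card_pos: "real (card (A w)) > 0" for w using finA[of w] by (simp add: card_gt_0_iff)
  have ptx: "0 \<le> p_tx A Dest w" "p_tx A Dest w \<le> 1/2" for w by (auto simp: p_tx_def)
  have Smax_ge: "card (A w) \<le> Smax A" for w unfolding Smax_def by (rule Max_ge) auto
  have m_ge: "m \<ge> 2 * real (card (A w))" "m \<ge> 3 * real Dest" for w
  proof -
    have "2 * card (A w) \<le> max (2 * Smax A) (3 * Dest)" using Smax_ge[of w] by simp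
    then have "real (2 * card (A w)) \<le> m" unfolding m_def by (simp only: of_nat_le_iff)
    then show "m \<ge> 2 * real (card (A w))" by simp
    have "3 * Dest \<le> max (2 * Smax A) (3 * Dest)" by simp
    then have "real (3 * Dest) \<le> m" unfolding m_def by (simp only: of_nat_le_iff)
    then show "m \<ge> 3 * real Dest" by simp
  qed
  have m_pos: "m > 0" using m_ge(2) Dest_pos by simp
  have pv: "p_tx A Dest v / real (card (A v)) \<ge> 1 / m"
  proof (cases "1/2 \<le> real (card (A v)) / (3 * real Dest)")
    case True
    then have e: "p_tx A Dest v = 1/2" by (simp add: p_tx_def)
    have "1/m \<le> 1/(2 * real (card (A v)))" using m_ge(1)[of v] card_pos[of v] by (intro divide_left_mono) auto
    then show ?thesis by (simp add: e)
  next
    case False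
    then have e: "p_tx A Dest v = real (card (A v)) / (3 * real Dest)" by (simp add: p_tx_def)
    have e2: "p_tx A Dest v / real (card (A v)) = 1 / (3 * real Dest)" using card_pos[of v] by (simp add: e)
    have "1/m \<le> 1/(3 * real Dest)" using m_ge(2) Dest_pos by (intro divide_left_mono) auto
    then show ?thesis by (simp add: e2)
  qed
  have pf: "pmf (frame_pmf A Dest w) (c, b) =
     indicator (A w) c / real (card (A w)) * (if b then p_tx A Dest w else 1 - p_tx A Dest w)" for w c b
    using pmf_frame[where A=A and w=w and Dest=Dest] finA[of w] Dest_pos by blast
  have pmfT: "pmf (frame_pmf A Dest w) (c, True) \<le> 1 / (3 * real Dest)" for w c
  proof -
    have "pmf (frame_pmf A Dest w) (c, True) = indicator (A w) c / real (card (A w)) * p_tx A Dest w"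
      using pf[of w c True] by simp
    also have "\<dots> \<le> 1 / real (card (A w)) * p_tx A Dest w"
    proof (rule mult_right_mono)
      show "indicator (A w) c / real (card (A w)) \<le> 1 / real (card (A w))"
        using card_pos[of w] by (intro divide_right_mono) (auto simp: indicator_def)
    qed (rule ptx(1))
    also have "\<dots> \<le> 1 / (3 * real Dest)"
    proof -
      have "p_tx A Dest w \<le> real (card (A w)) / (3 * real Dest)" by (simp add: p_tx_def)
      then show ?thesis using card_pos[of w] Dest_pos by (simp add: field_simps)
    qed
    finally show ?thesis .
  qed
  have mf: "measure (Mf i) {x} = pmf (frame_pmf A Dest (fst i)) x" for i x
    by (simp add: Mf_def measure_pmf_single)
  have mfc: "measure (Mf i) (- {x}) = 1 - pmf (frame_pmf A Dest (fst i)) x" for i x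
  proof -
    have "measure (Mf i) (space (Mf i) - {x}) = 1 - measure (Mf i) {x}"
      by (rule prob_space.prob_compl[OF psMf]) simp
    then show ?thesis by (simp add: Mf_def measure_pmf_single Compl_eq_Diff_UNIV)
  qed

  define RS where "RS = {span_ratio A v' u' |v' u'. neighbors A nb v' u'}"
  have RSmem: "span_ratio A a b \<in> RS" if "neighbors A nb a b" for a b
    unfolding RS_def using that by blast
  have RS_fin: "finite RS"
  proof -
    have "RS \<subseteq> (\<lambda>(a,b). span_ratio A a b) ` UNIV"
    proof
      fix x assume "x \<in> RS"
      then obtain a b where "x = span_ratio A a b" unfolding RS_def by blast
      then show "x \<in> (\<lambda>(a,b). span_ratio A a b) ` UNIV" by (intro range_eqI[where x="(a,b)"]) simp
    qed
    then show ?thesis by (rule finite_subset) simp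
  qed
  have r_le: "r \<le> span_ratio A v u"
    unfolding r_def rho_def RS_def[symmetric] using RS_fin RSmem[OF link] by (rule Min_le)
  have r_pos: "r > 0"
  proof -
    have "RS \<noteq> {}" using RSmem[OF link] by blast
    moreover have "\<forall>x\<in>RS. 0 < x"
    proof
      fix x assume "x \<in> RS"
      then obtain a b where x: "x = span_ratio A a b" and n: "neighbors A nb a b" unfolding RS_def by blast
      then obtain c where "c \<in> A b \<inter> A a" by (auto simp: neighbors_def nbc_def)
      then have "span A a b \<noteq> {}" "finite (span A a b)" by (auto simp: span_def finA)
      then have "card (span A a b) > 0" by (simp add: card_gt_0_iff)
      then show "0 < x" using card_pos[of b] by (simp add: x span_ratio_def)
    qed
    ultimately show ?thesis unfolding r_def rho_def RS_def[symmetric] using RS_fin by (simp add: Min_gr_iff)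
  qed
  have q_pos: "q > 0" using r_pos m_pos by (simp add: q_def)

  have probcov: "PS.prob {\<omega> \<in> space P. cov k \<omega>} \<ge> q" if kM: "k < M" for k
  proof -
    define Jc where "Jc c = insert (f k) (insert (g k) (H k c))" for c :: 'c
    define X where "X c i = (if i = f k then {(c,True)} else if i = g k then {(c,False)} else - {(c,True)})" for c :: 'c and i :: "'n frame"
    define G where "G c = {\<omega> \<in> space P. \<forall>i\<in>Jc c. \<omega> i \<in> X c i}" for c :: 'c
    have fg: "f k \<noteq> g k" using fk[OF kM] v_ne_u by auto
    have fH: "f k \<notin> H k c" "g k \<notin> H k c" for c using Hfst fk[OF kM] by blast+
    have XH: "X c h = - {(c,True)}" if "h \<in> H k c" for c h
      using that fH[of c] by (auto simp: X_def)
    have memG: "\<omega> \<in> G c \<longleftrightarrow> \<omega> \<in> space P \<and> \<omega> (f k) = (c,True) \<and> \<omega> (g k) = (c,False) \<and> (\<forall>h\<in>H k c. \<omega> h \<noteq> (c,True))" for \<omega> c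
      using fg XH[of _ c] by (auto simp: G_def Jc_def X_def)
    have union: "{\<omega> \<in> space P. cov k \<omega>} = (\<Union>c\<in>sp. G c)" by (auto simp: memG cov_def)
    have Gsets: "G c \<in> sets P" for c
    proof -
      have "Measurable.pred (PiM UNIV Mf) (\<lambda>\<omega>. \<forall>i\<in>Jc c. \<omega> i \<in> X c i)"
        by (rule pred_intros_finite(3)) (simp_all add: Jc_def fin_H atomU)
      then show ?thesis unfolding G_def P_eq pred_def .
    qed
    have Gdisj: "disjoint_family_on G sp" unfolding disjoint_family_on_def by (auto simp: memG)
    have sumeq: "PS.prob {\<omega> \<in> space P. cov k \<omega>} = (\<Sum>c\<in>sp. PS.prob (G c))"
      unfolding union by (rule PS.finite_measure_finite_Union) (use fin_sp Gsets Gdisj in auto)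
    have Gm: "PS.prob (G c) = pmf (frame_pmf A Dest v) (c,True) * (pmf (frame_pmf A Dest u) (c,False) *
          (\<Prod>h\<in>H k c. 1 - pmf (frame_pmf A Dest (fst h)) (c,True)))" for c
    proof -
      have "PS.prob (G c) = (\<Prod>i\<in>Jc c. measure (Mf i) (X c i))"
        unfolding G_def P_eq by (rule PP.measure_PiM_Collect) (simp_all add: Jc_def fin_H)
      also have "\<dots> = measure (Mf (f k)) (X c (f k)) * (measure (Mf (g k)) (X c (g k)) *
           (\<Prod>h\<in>H k c. measure (Mf h) (X c h)))"
        unfolding Jc_def using fg fH[of c] fin_H[of k c] by (simp add: prod.insert)
      also have "(\<Prod>h\<in>H k c. measure (Mf h) (X c h)) = (\<Prod>h\<in>H k c. 1 - pmf (frame_pmf A Dest (fst h)) (c,True))"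
        by (rule prod.cong) (simp_all add: XH mfc)
      finally show ?thesis using fg fk[OF kM] by (simp add: X_def mf)
    qed
    have Gb: "PS.prob (G c) \<ge> 1 / m * (1 / (2 * real (card (A u))) * (1/4))" if c: "c \<in> sp" for c
    proof -
      have cu: "c \<in> A u" "c \<in> A v" using c by (auto simp: sp_def span_def)
      define a where "a = 1 - 1 / (3 * real Dest)"
      have a01: "0 \<le> a" "a \<le> 1" using Dest_pos by (auto simp: a_def field_simps)
      have Hb: "(\<Prod>h\<in>H k c. 1 - pmf (frame_pmf A Dest (fst h)) (c,True)) \<ge> 1/4"
      proof -
        have "(\<Prod>h\<in>H k c. a) \<le> (\<Prod>h\<in>H k c. 1 - pmf (frame_pmf A Dest (fst h)) (c,True))"
          by (rule prod_mono) (use a01 pmfT in \<open>auto simp: a_def\<close>)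
        moreover have "(\<Prod>h\<in>H k c. a) = a ^ card (H k c)" by simp
        moreover have "a ^ (3 * Dest - 3) \<le> a ^ card (H k c)"
        proof (rule power_decreasing)
          show "card (H k c) \<le> 3 * Dest - 3" using cardH[of c k, OF c] by (simp add: diff_mult_distrib2)
        qed (use a01 in auto)
        moreover have "1/4 \<le> a ^ (3*Dest - 3)" unfolding a_def using pow_quarter[of Dest] Dest_pos by simp
        ultimately show ?thesis by linarith
      qed
      have t1: "pmf (frame_pmf A Dest v) (c,True) \<ge> 1/m"
        using pf[of v c True] pv cu by simp
      have t2: "pmf (frame_pmf A Dest u) (c,False) \<ge> 1 / (2 * real (card (A u)))"
      proof -
        have "pmf (frame_pmf A Dest u) (c,False) = (1 - p_tx A Dest u) / real (card (A u))"
          using pf[of u c False] cu by simp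
        moreover have "1 - p_tx A Dest u \<ge> 1/2" using ptx(2)[of u] by simp
        ultimately show ?thesis using card_pos[of u] by (simp add: field_simps)
      qed
      have "1 / m * (1 / (2 * real (card (A u))) * (1/4)) \<le>
          pmf (frame_pmf A Dest v) (c,True) * (pmf (frame_pmf A Dest u) (c,False) *
          (\<Prod>h\<in>H k c. 1 - pmf (frame_pmf A Dest (fst h)) (c,True)))"
        using t1 t2 Hb m_pos card_pos[of u]
        by (intro mult_mono) (auto intro!: mult_nonneg_nonneg)
      then show ?thesis by (simp add: Gm)
    qed
    have "(\<Sum>c\<in>sp. 1 / m * (1 / (2 * real (card (A u))) * (1/4))) \<le> (\<Sum>c\<in>sp. PS.prob (G c))"
      by (rule sum_mono) (rule Gb)
    moreover have "(\<Sum>c\<in>sp. 1 / m * (1 / (2 * real (card (A u))) * (1/4))) = span_ratio A v u / (8 * m)"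
      using card_pos[of u] m_pos by (simp add: span_ratio_def sp_def field_simps)
    moreover have "q \<le> span_ratio A v u / (8 * m)" unfolding q_def using r_le m_pos by (simp add: divide_right_mono)
    ultimately show ?thesis using sumeq by linarith
  qed

  have ind0: "PS.indep_vars Mf (\<lambda>i \<omega>. \<omega> i) UNIV"
  proof -
    have rv: "(\<lambda>\<omega>. \<omega> i) \<in> measurable P (Mf i)" for i
      unfolding P_eq by (rule measurable_component_singleton) simp
    have r1: "(\<lambda>x. \<lambda>i\<in>UNIV. x i) = (\<lambda>x::'n frame \<Rightarrow> 'c \<times> bool. x)" by (simp add: restrict_def)
    have r2: "PiM UNIV (\<lambda>i. distr P (Mf i) (\<lambda>\<omega>. \<omega> i)) = PiM UNIV Mf"
      by (rule PiM_cong) (simp_all add: P_eq PP.PiM_component)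
    have "distr P (PiM UNIV Mf) (\<lambda>x. \<lambda>i\<in>UNIV. x i) = PiM UNIV (\<lambda>i. distr P (Mf i) (\<lambda>\<omega>. \<omega> i))"
      unfolding r1 r2 by (simp add: P_eq)
    then show ?thesis using rv by (subst PS.indep_vars_iff_distr_eq_PiM) auto
  qed
  have ind: "PS.indep_vars (\<lambda>k. PiM (J k) Mf) (\<lambda>k \<omega>. restrict (\<lambda>i. \<omega> i) (J k)) {..<M}"
    by (rule PS.indep_vars_restrict[OF ind0]) (simp_all add: disjJ)
  define B where "B k = {x \<in> space (PiM (J k) Mf). \<not> cov k x}" for k
  have Bsets: "B k \<in> sets (PiM (J k) Mf)" for k
  proof -
    have "Measurable.pred (PiM (J k) Mf) (\<lambda>x. \<not> cov k x)"
      by (rule pred_intros_logic(2)) (rule pred_cov, simp)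
    then show ?thesis unfolding B_def pred_def .
  qed
  have pre: "(\<lambda>\<omega>. restrict (\<lambda>i. \<omega> i) (J k)) -` B k \<inter> space P = {\<omega> \<in> space P. \<not> cov k \<omega>}" for k
  proof -
    have "restrict \<omega> (J k) \<in> space (PiM (J k) Mf)" for \<omega>
      by (simp add: space_PiM Mf_def)
    then show ?thesis using cov_restrict by (auto simp: B_def)
  qed
  have Esets: "{\<omega> \<in> space P. \<not> cov k \<omega>} \<in> sets P" for k
  proof -
    have "Measurable.pred (PiM UNIV Mf) (\<lambda>x. \<not> cov k x)"
      by (rule pred_intros_logic(2)) (rule pred_cov, simp)
    then show ?thesis unfolding P_eq pred_def .
  qed
  have Eprob: "PS.prob {\<omega> \<in> space P. \<not> cov k \<omega>} \<le> 1 - q" if "k < M" for k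
  proof -
    have "{\<omega> \<in> space P. cov k \<omega>} \<in> sets P"
    proof -
      have "Measurable.pred (PiM UNIV Mf) (\<lambda>x. cov k x)" by (rule pred_cov) simp
      then show ?thesis unfolding P_eq pred_def .
    qed
    then have "PS.prob (space P - {\<omega> \<in> space P. cov k \<omega>}) = 1 - PS.prob {\<omega> \<in> space P. cov k \<omega>}"
      by (rule PS.prob_compl)
    moreover have "space P - {\<omega> \<in> space P. cov k \<omega>} = {\<omega> \<in> space P. \<not> cov k \<omega>}" by auto
    ultimately show ?thesis using probcov[OF that] by simp
  qed

  have N2: "real CARD('n) \<ge> 2"
  proof -
    have "card {u, v} \<le> CARD('n)" by (rule card_mono) auto
    then show ?thesis using v_ne_u by simp
  qed
  have gt1: "real CARD('n) ^ 2 / \<epsilon> > 1"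
  proof -
    have "real CARD('n) ^ 2 \<ge> 2 ^ 2" using N2 by (intro power_mono) auto
    then have "real CARD('n) ^ 2 > \<epsilon>" using eps by simp
    then show ?thesis using eps by (simp add: field_simps)
  qed
  define l where "l = ln (real CARD('n) ^ 2 / \<epsilon>)"
  have l_pos: "l > 0" using gt1 by (simp add: l_def)
  define Xr where "Xr = 8 * m / r * l"
  have MX: "M = nat \<lceil>Xr\<rceil>" using M_def by (simp add: Xr_def m_def r_def l_def)
  have Xpos: "Xr > 0" using m_pos r_pos l_pos by (simp add: Xr_def)
  have MgeX: "real M \<ge> Xr" unfolding MX by (rule real_nat_ceiling_ge)
  have Mpos: "M > 0" using MgeX Xpos by linarith
  have qX: "q * Xr = l" using m_pos r_pos by (simp add: q_def Xr_def field_simps)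
  have "q * Xr \<le> q * real M" using MgeX q_pos by (intro mult_left_mono) auto
  then have qM: "q * real M \<ge> l" using qX by simp
  have q_le1: "q \<le> 1" using probcov[OF Mpos] PS.prob_le_1[of "{\<omega> \<in> space P. cov 0 \<omega>}"] by linarith

  have Mne: "{..<M} \<noteq> {}" using Mpos by auto
  have prodeq: "PS.prob (\<Inter>k\<in>{..<M}. {\<omega> \<in> space P. \<not> cov k \<omega>}) = (\<Prod>k\<in>{..<M}. PS.prob {\<omega> \<in> space P. \<not> cov k \<omega>})"
    using PS.indep_varsD[OF ind Mne finite_lessThan subset_refl Bsets] unfolding pre .
  have setEq: "{\<omega> \<in> space P. \<not> seq_covers A nb C s L \<omega> \<sigma> M} = (\<Inter>k\<in>{..<M}. {\<omega> \<in> space P. \<not> cov k \<omega>})"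
    using Mne by (auto simp: seq_eq)
  have "(\<Prod>k\<in>{..<M}. PS.prob {\<omega> \<in> space P. \<not> cov k \<omega>}) \<le> (\<Prod>k\<in>{..<M}. 1 - q)"
    by (rule prod_mono) (simp add: Eprob)
  also have "\<dots> = (1 - q) ^ M" by simp
  also have "\<dots> \<le> exp (- q) ^ M"
    using q_le1 exp_ge_add_one_self[of "-q"] by (intro power_mono) auto
  also have "\<dots> = exp (real M * (- q))" by (rule exp_of_nat_mult[symmetric])
  also have "\<dots> \<le> exp (- l)" using qM by (simp add: algebra_simps)
  also have "\<dots> = \<epsilon> / real CARD('n) ^ 2"
    using gt1 eps by (simp add: l_def exp_minus exp_ln)
  finally have fin: "PS.prob (\<Inter>k\<in>{..<M}. {\<omega> \<in> space P. \<not> cov k \<omega>}) \<le> \<epsilon> / real CARD('n) ^ 2"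
    unfolding prodeq .
  have meas: "(\<Inter>k\<in>{..<M}. {\<omega> \<in> space P. \<not> cov k \<omega>}) \<in> sets P"
    using Mne Esets by (intro sets.finite_INT) auto
  have "{\<omega> \<in> space P. \<not> seq_covers A nb C s L \<omega> \<sigma> M} \<in> sets P \<and>
      PS.prob {\<omega> \<in> space P. \<not> seq_covers A nb C s L \<omega> \<sigma> M} \<le> \<epsilon> / real CARD('n) ^ 2"
    unfolding setEq using fin meas by simp
  then show ?thesis unfolding P_def .
qed
end
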